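(* For every limit-periodic potential $d\in\ell^\infty(\mathbb{Z})$, the topological group $\mathrm{hull}(d)$ is a procyclic group, i.e. it is isomorphic (as a topological group) to the inverse limit of an inverse system of finite cyclic groups.
   Context: $\sigma$ is the left shift on $\ell^\infty(\mathbb{Z})$ (sup norm), $(\sigma d)_n=d_{n+1}$, and $\mathrm{hull}(d)$ is the closure of $\{\sigma^k d:k\in\mathbb{Z}\}$. A potential is periodic if its shift orbit is finite, and limit-periodic if it lies in the $\ell^\infty$-closure of the periodic potentials. For limit-periodic $d$, $\mathrm{hull}(d)$ is compact and carries a unique topological group structure with identity $d$ such that $k\mapsto\sigma^k(d)$ is a homomorphism $\mathbb{Z}\to\mathrm{hull}(d)$. An inverse limit of an inverse system $(X_i,\phi_{ij})$ of topological groups (continuous homomorphisms $\phi_{ij}:X_j\to X_i$ for $i\le j$ in a directed set, with $\phi_{ii}=\mathrm{id}$, $\phi_{ij}\phi_{jk}=\phi_{ik}$) is a topological group $X$ with compatible continuous homomorphisms $\phi_i:X\to X_i$ ($\phi_{ij}\phi_j=\phi_i$) universal among such families; finite cyclic groups carry the discrete topology. *)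

theory Defs
  imports "HOL-Analysis.Analysis" "HOL-Algebra.Elementary_Groups"
begin

(* The type int has the discrete topology, so int \<Rightarrow>\<^sub>C real is exactly
  \<ell>^\<infinity>(\<int>) with its sup-norm metric. *)
type_synonym potential = "int \<Rightarrow>\<^sub>C real"

setup_lifting type_definition_bcontfun

lift_definition shiftp :: "int \<Rightarrow> potential \<Rightarrow> potential"
  is "\<lambda>k f n. f (n + k)"
proof -
  fix k :: int and f :: "int \<Rightarrow> real"
  assume "f \<in> bcontfun"
  then have "bounded (range f)" by (simp add: bcontfun_def)
  moreover have "range (\<lambda>n. f (n + k)) \<subseteq> range f" by auto
  ultimately have "bounded (range (\<lambda>n. f (n + k)))" using bounded_subset by blast
  moreover have "continuous_on UNIV (\<lambda>n::int. f (n + k))"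
    by (simp add: continuous_on_discrete)
  ultimately show "(\<lambda>n. f (n + k)) \<in> bcontfun" by (simp add: bcontfun_def)
qed

definition pot_hull :: "potential \<Rightarrow> potential set" where
  "pot_hull d = closure (range (\<lambda>k. shiftp k d))"

definition periodic_pot :: "potential \<Rightarrow> bool" where
  "periodic_pot p \<longleftrightarrow> finite (range (\<lambda>k. shiftp k p))"

definition limit_periodic :: "potential \<Rightarrow> bool" where
  "limit_periodic d \<longleftrightarrow> d \<in> closure {p. periodic_pot p}"

definition topological_group :: "('a, 'b) monoid_scheme \<Rightarrow> 'a topology \<Rightarrow> bool" where
  "topological_group G T \<longleftrightarrow> group G \<and> topspace T = carrier G \<and>
     continuous_map (prod_topology T T) T (\<lambda>(x, y). x \<otimes>\<^bsub>G\<^esub> y) \<and>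
     continuous_map T T (\<lambda>x. inv\<^bsub>G\<^esub> x)"

definition hull_group :: "potential \<Rightarrow> potential monoid \<Rightarrow> bool" where
  "hull_group d G \<longleftrightarrow> carrier G = pot_hull d \<and> topological_group G (top_of_set (pot_hull d)) \<and>
     \<one>\<^bsub>G\<^esub> = d \<and>
     (\<forall>j k. shiftp (j + k) d = shiftp j d \<otimes>\<^bsub>G\<^esub> shiftp k d)"

definition top_group_iso ::
  "('a, 'c) monoid_scheme \<Rightarrow> 'a topology \<Rightarrow> ('b, 'e) monoid_scheme \<Rightarrow> 'b topology \<Rightarrow> bool" where
  "top_group_iso G S H T \<longleftrightarrow> (\<exists>h. h \<in> iso G H \<and> homeomorphic_map S T h)"

definition inverse_system ::
  "'i set \<Rightarrow> ('i \<Rightarrow> 'i \<Rightarrow> bool) \<Rightarrow> ('i \<Rightarrow> 'a monoid) \<Rightarrow> ('i \<Rightarrow> 'i \<Rightarrow> 'a \<Rightarrow> 'a) \<Rightarrow> bool" where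
  "inverse_system I leq X \<phi> \<longleftrightarrow>
     I \<noteq> {} \<and>
     (\<forall>i\<in>I. leq i i) \<and>
     (\<forall>i\<in>I. \<forall>j\<in>I. \<forall>k\<in>I. leq i j \<longrightarrow> leq j k \<longrightarrow> leq i k) \<and>
     (\<forall>i\<in>I. \<forall>j\<in>I. \<exists>k\<in>I. leq i k \<and> leq j k) \<and>
     (\<forall>i\<in>I. group (X i)) \<and>
     (\<forall>i\<in>I. \<forall>j\<in>I. leq i j \<longrightarrow> \<phi> i j \<in> hom (X j) (X i)) \<and>
     (\<forall>i\<in>I. \<forall>x\<in>carrier (X i). \<phi> i i x = x) \<and>
     (\<forall>i\<in>I. \<forall>j\<in>I. \<forall>k\<in>I. leq i j \<longrightarrow> leq j k \<longrightarrow>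
        (\<forall>x\<in>carrier (X k). \<phi> i j (\<phi> j k x) = \<phi> i k x))"

definition inv_lim_carrier ::
  "'i set \<Rightarrow> ('i \<Rightarrow> 'i \<Rightarrow> bool) \<Rightarrow> ('i \<Rightarrow> 'a monoid) \<Rightarrow> ('i \<Rightarrow> 'i \<Rightarrow> 'a \<Rightarrow> 'a) \<Rightarrow> ('i \<Rightarrow> 'a) set" where
  "inv_lim_carrier I leq X \<phi> =
     {x \<in> (\<Pi>\<^sub>E i\<in>I. carrier (X i)). \<forall>i\<in>I. \<forall>j\<in>I. leq i j \<longrightarrow> \<phi> i j (x j) = x i}"

definition inv_lim ::
  "'i set \<Rightarrow> ('i \<Rightarrow> 'i \<Rightarrow> bool) \<Rightarrow> ('i \<Rightarrow> 'a monoid) \<Rightarrow> ('i \<Rightarrow> 'i \<Rightarrow> 'a \<Rightarrow> 'a) \<Rightarrow> ('i \<Rightarrow> 'a) monoid" where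
  "inv_lim I leq X \<phi> =
     \<lparr>carrier = inv_lim_carrier I leq X \<phi>,
      mult = (\<lambda>x y. \<lambda>i\<in>I. x i \<otimes>\<^bsub>X i\<^esub> y i),
      one = (\<lambda>i\<in>I. \<one>\<^bsub>X i\<^esub>)\<rparr>"

definition inv_lim_topology ::
  "'i set \<Rightarrow> ('i \<Rightarrow> 'i \<Rightarrow> bool) \<Rightarrow> ('i \<Rightarrow> 'a monoid) \<Rightarrow> ('i \<Rightarrow> 'i \<Rightarrow> 'a \<Rightarrow> 'a) \<Rightarrow> ('i \<Rightarrow> 'a) topology" where
  "inv_lim_topology I leq X \<phi> =
     subtopology (product_topology (\<lambda>i. discrete_topology (carrier (X i))) I)
                 (inv_lim_carrier I leq X \<phi>)"

(* Index sets range over sets of subsets of the group's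
  element type, and the finite cyclic groups are represented on int (no loss up to iso). *)
definition procyclic :: "('a, 'c) monoid_scheme \<Rightarrow> 'a topology \<Rightarrow> bool" where
  "procyclic G T \<longleftrightarrow>
     (\<exists>(I :: 'a set set) leq (X :: 'a set \<Rightarrow> int monoid) \<phi>.
        inverse_system I leq X \<phi> \<and>
        (\<forall>i\<in>I. finite (carrier (X i)) \<and> cyclic_group (X i)) \<and>
        top_group_iso G T (inv_lim I leq X \<phi>) (inv_lim_topology I leq X \<phi>))"

end

theory Submission
  imports Defs
begin

lemma shiftp_apply: "apply_bcontfun (shiftp k f) n = apply_bcontfun f (n + k)"
  by (simp add: shiftp.rep_eq)

lemma shiftp_shiftp: "shiftp j (shiftp k f) = shiftp (j+k) f"
  by (rule bcontfun_eqI) (simp add: shiftp_apply ac_simps)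

lemma shiftp_0[simp]: "shiftp 0 f = f"
  by (rule bcontfun_eqI) (simp add: shiftp_apply)

lemma dist_shiftp_le: "dist (shiftp k f) (shiftp k g) \<le> dist f g"
  by (rule dist_bound) (simp add: shiftp_apply dist_bounded)

lemma dist_shiftp[simp]: "dist (shiftp k f) (shiftp k g) = dist f g"
proof -
  have "dist f g = dist (shiftp (-k) (shiftp k f)) (shiftp (-k) (shiftp k g))"
    by (simp add: shiftp_shiftp)
  also have "\<dots> \<le> dist (shiftp k f) (shiftp k g)" by (rule dist_shiftp_le)
  finally show ?thesis using dist_shiftp_le by (simp add: antisym)
qed

lemma dist_orb: "dist (shiftp j d) (shiftp k d) = dist (shiftp (j-k) d) d"
proof -
  have "dist (shiftp j d) (shiftp k d) = dist (shiftp (-k) (shiftp j d)) (shiftp (-k) (shiftp k d))"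
    by simp
  thus ?thesis by (simp add: shiftp_shiftp)
qed

lemma g_triangle: "dist (shiftp (a+b) d) d \<le> dist (shiftp a d) d + dist (shiftp b d) d"
proof -
  have "dist (shiftp (a+b) d) d \<le> dist (shiftp (a+b) d) (shiftp a d) + dist (shiftp a d) d"
    by (rule dist_triangle)
  also have "dist (shiftp (a+b) d) (shiftp a d) = dist (shiftp b d) d"
    by (simp add: dist_orb)
  finally show ?thesis by simp
qed

lemma g_minus: "dist (shiftp (-a) d) d = dist (shiftp a d) d"
  by (metis dist_commute dist_orb diff_0 shiftp_0)

lemma periodic_period:
  assumes "periodic_pot p"
  shows "\<exists>N>0. shiftp N p = p"
proof -
  have "\<not> inj (\<lambda>k. shiftp k p)"
  proof
    assume "inj (\<lambda>k. shiftp k p)"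
    hence "infinite (range (\<lambda>k. shiftp k p))"
      using finite_imageD infinite_UNIV_int by blast
    thus False using assms by (simp add: periodic_pot_def)
  qed
  then obtain a b where ab: "a \<noteq> b" "shiftp a p = shiftp b p" unfolding inj_def by blast
  hence "shiftp (b - a) p = p \<and> shiftp (a - b) p = p"
    by (metis (no_types, lifting) diff_add_cancel shiftp_0 shiftp_shiftp diff_self add.commute)
  with ab show ?thesis
    by (cases "a < b") (force, force)
qed

lemma shiftp_mult_period:
  assumes "shiftp N p = p"
  shows "shiftp (m * N) p = p"
proof -
  have pos: "shiftp (int n * N) p = p" for n
    by (induction n) (simp_all add: algebra_simps, metis assms shiftp_shiftp add.commute)
  have neg: "shiftp (- (int n * N)) p = p" for n
    by (metis pos shiftp_shiftp shiftp_0 add.left_inverse)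
  show ?thesis
  proof (cases "m \<ge> 0")
    case True then show ?thesis using pos[of "nat m"] by simp
  next
    case False then show ?thesis using neg[of "nat (-m)"] by simp
  qed
qed

lemma lp_approx:
  assumes "limit_periodic d" "e > 0"
  shows "\<exists>N>0. \<forall>m. dist (shiftp (m*N) d) d < e"
proof -
  obtain p where p: "periodic_pot p" "dist p d < e/2"
    using assms unfolding limit_periodic_def closure_approachable
    by (metis half_gt_zero mem_Collect_eq)
  obtain N where N: "N > 0" "shiftp N p = p" using periodic_period[OF p(1)] by blast
  have "dist (shiftp (m*N) d) d < e" for m
  proof -
    have "dist (shiftp (m*N) d) d \<le> dist (shiftp (m*N) d) (shiftp (m*N) p) + dist (shiftp (m*N) p) d"
      by (rule dist_triangle)
    also have "dist (shiftp (m*N) d) (shiftp (m*N) p) = dist d p" by (rule dist_shiftp)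
    also have "shiftp (m*N) p = p" using shiftp_mult_period[OF N(2)] by simp
    finally show ?thesis using p(2) by (simp add: dist_commute)
  qed
  with N show ?thesis by blast
qed

locale lpd =
  fixes d :: potential
  assumes lp: "limit_periodic d"
begin

abbreviation g :: "int \<Rightarrow> real" where "g k \<equiv> dist (shiftp k d) d"

definition T :: "int set" where
  "T = {q. q > 0 \<and> (\<exists>\<delta>>0. \<forall>j. g j < \<delta> \<longrightarrow> q dvd j)}"

definition del :: "int \<Rightarrow> real" where
  "del q = (SOME \<delta>. \<delta> > 0 \<and> (\<forall>j. g j < \<delta> \<longrightarrow> q dvd j))"

definition fq :: "int \<Rightarrow> potential \<Rightarrow> int" where
  "fq q x = (SOME k. dist x (shiftp k d) < del q / 2) mod q"

lemma orb_in_hull: "shiftp k d \<in> pot_hull d"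
  unfolding pot_hull_def by (rule closure_subset[THEN subsetD]) auto

lemma hull_approx:
  assumes "x \<in> pot_hull d" "e > 0"
  shows "\<exists>k. dist x (shiftp k d) < e"
  using assms unfolding pot_hull_def closure_approachable
  by (metis (no_types, lifting) dist_commute imageE)

lemma T_pos: "q \<in> T \<Longrightarrow> q > 0" by (simp add: T_def)

lemma del: assumes "q \<in> T" shows "del q > 0" "g j < del q \<Longrightarrow> q dvd j"
proof -
  have "\<exists>\<delta>. \<delta> > 0 \<and> (\<forall>j. g j < \<delta> \<longrightarrow> q dvd j)" using assms by (auto simp: T_def)
  from someI_ex[OF this] show "del q > 0" "g j < del q \<Longrightarrow> q dvd j"
    unfolding del_def by blast+
qed

lemma fq_eq:
  assumes "q \<in> T" "x \<in> pot_hull d" "dist x (shiftp k d) < del q / 2"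
  shows "fq q x = k mod q"
proof -
  define k0 where "k0 = (SOME k. dist x (shiftp k d) < del q / 2)"
  have "del q / 2 > 0" using del(1)[OF assms(1)] by simp
  hence "\<exists>k. dist x (shiftp k d) < del q / 2"
    using hull_approx[OF assms(2)] by blast
  hence k0: "dist x (shiftp k0 d) < del q / 2" unfolding k0_def by (rule someI_ex)
  have "dist (shiftp k0 d) (shiftp k d) < del q"
    using dist_triangle[of "shiftp k0 d" "shiftp k d" x] dist_commute[of "shiftp k0 d" x] k0 assms(3)
    by linarith
  hence "g (k0 - k) < del q" by (simp only: dist_orb)
  hence "q dvd k0 - k" using del(2)[OF assms(1)] by blast
  hence "k0 mod q = k mod q" by (simp add: mod_eq_dvd_iff)
  thus ?thesis unfolding fq_def k0_def by simp
qed

lemma fq_orb: "q \<in> T \<Longrightarrow> fq q (shiftp k d) = k mod q"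
  using fq_eq[OF _ orb_in_hull] del(1) by simp

lemma fq_range: "q \<in> T \<Longrightarrow> fq q x \<in> {0..<q}"
  using T_pos by (simp add: fq_def)

lemma fq_local:
  assumes "q \<in> T" "x \<in> pot_hull d" "y \<in> pot_hull d" "dist x y < del q / 4"
  shows "fq q y = fq q x"
proof -
  obtain k where k: "dist x (shiftp k d) < del q / 4"
    using hull_approx[OF assms(2)] del(1)[OF assms(1)] by (metis divide_pos_pos zero_less_numeral)
  have "dist y (shiftp k d) \<le> dist y x + dist x (shiftp k d)" by (rule dist_triangle)
  hence "dist y (shiftp k d) < del q / 2" using k assms(4) by (simp add: dist_commute)
  moreover have "dist x (shiftp k d) < del q / 2" using k del(1)[OF assms(1)] by simp
  ultimately show ?thesis using fq_eq assms by metis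
qed

lemma T_1: "1 \<in> T"
  unfolding T_def by (auto intro: exI[of _ 1])

lemma T_lcm:
  assumes "a \<in> T" "b \<in> T" shows "lcm a b \<in> T"
proof -
  have "lcm a b > 0" using T_pos[OF assms(1)] T_pos[OF assms(2)]
    by (simp add: lcm_pos_int)
  moreover have "\<forall>j. g j < min (del a) (del b) \<longrightarrow> lcm a b dvd j"
    using del[OF assms(1)] del[OF assms(2)] by (auto intro: lcm_least)
  moreover have "min (del a) (del b) > 0" using del(1) assms by simp
  ultimately show ?thesis unfolding T_def by blast
qed

lemma fq_dvd:
  assumes "a \<in> T" "b \<in> T" "a dvd b" "x \<in> pot_hull d"
  shows "fq b x mod a = fq a x"
proof -
  obtain k where k: "dist x (shiftp k d) < min (del a) (del b) / 2"
    using hull_approx[OF assms(4)] del(1) assms(1,2) by (metis min_def half_gt_zero)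
  hence "fq a x = k mod a" "fq b x = k mod b" using fq_eq assms by auto
  thus ?thesis using assms(3) by (simp add: mod_mod_cancel)
qed

end

lemma potential_Cauchy_convergent:
  fixes f :: "nat \<Rightarrow> potential"
  assumes "Cauchy f" shows "convergent f"
proof -
  obtain g where "uniform_limit UNIV f g sequentially"
    using uniformly_convergent_eq_cauchy[of "\<lambda>_. True" f] assms
    unfolding Cauchy_def uniform_limit_sequentially_iff
    by (metis dist_fun_lt_imp_dist_val_lt)
  from uniform_limit_bcontfunE[OF this sequentially_bot]
  obtain l' where "g = apply_bcontfun l'" "(f \<longlonglongrightarrow> l')" by metis
  then show "convergent f"
    by (intro convergentI)
qed
lemma complete_potential: "complete (UNIV :: potential set)"
  by (meson potential_Cauchy_convergent UNIV_I completeI convergent_def)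
context lpd begin

lemma g_diff: "g (a - b) \<le> g a + g b"
  using g_triangle[of a "-b" d] g_minus[of b d] by simp

lemma richness:
  assumes "e > 0"
  shows "\<exists>q\<in>T. \<forall>j. q dvd j \<longrightarrow> g j < e"
proof -
  obtain N where N: "N > 0" "\<And>m. g (m*N) < e/2" using lp_approx[OF lp, of "e/2"] assms by auto
  define A where "A = {j. \<forall>\<eta>>0. \<exists>m. g (j + m*N) < \<eta>}"
  have Ai: "\<exists>m. g (j + m*N) < \<eta>" if "j \<in> A" "\<eta> > 0" for j \<eta>
    using that unfolding A_def by blast
  have A_add: "j + k \<in> A" if jA: "j \<in> A" and kA: "k \<in> A" for j k
  proof -
    { fix \<eta> :: real assume "\<eta> > 0"
      hence h: "\<eta>/2 > 0" by simp
      obtain m1 where m1: "g (j + m1*N) < \<eta>/2" using Ai[OF jA h] by blast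
      obtain m2 where m2: "g (k + m2*N) < \<eta>/2" using Ai[OF kA h] by blast
      have eq: "j + k + (m1+m2)*N = (j + m1*N) + (k + m2*N)" by (simp add: algebra_simps)
      have "g (j + k + (m1+m2)*N) \<le> g (j + m1*N) + g (k + m2*N)"
        unfolding eq by (rule g_triangle)
      hence "g (j + k + (m1+m2)*N) < \<eta>" using m1 m2 by linarith
      hence "\<exists>m. g (j + k + m*N) < \<eta>" by blast }
    thus ?thesis unfolding A_def by blast
  qed
  have A_neg: "- j \<in> A" if jA: "j \<in> A" for j
  proof -
    { fix \<eta> :: real assume "\<eta> > 0"
      then obtain m where m: "g (j + m*N) < \<eta>" using Ai[OF jA] by blast
      have eq: "- j + (-m)*N = - (j + m*N)" by (simp add: algebra_simps)
      have "g (- j + (-m)*N) = g (j + m*N)" unfolding eq by (rule g_minus)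
      hence "\<exists>m. g (- j + m*N) < \<eta>" using m by metis }
    thus ?thesis unfolding A_def by blast
  qed
  have A_0: "0 \<in> A" unfolding A_def by (auto intro: exI[of _ 0])
  have A_shift: "r + c*N \<in> A" if rA: "r \<in> A" for r c
  proof -
    { fix \<eta> :: real assume "\<eta> > 0"
      then obtain m where m: "g (r + m*N) < \<eta>" using Ai[OF rA] by blast
      have eq: "r + c*N + (m - c)*N = r + m*N" by (simp add: algebra_simps)
      hence "\<exists>m. g (r + c*N + m*N) < \<eta>" using m by metis }
    thus ?thesis unfolding A_def by blast
  qed
  have A_N: "N \<in> A" using A_shift[OF A_0, of 1] by simp
  have A_multn: "int n * q \<in> A" if "q \<in> A" for q n
  proof (induction n)
    case 0 thus ?case using A_0 by simp
  next
    case (Suc n)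
    have "int (Suc n) * q = int n * q + q" by (simp add: algebra_simps)
    thus ?case using A_add[OF Suc that] by simp
  qed
  have A_mult: "c * q \<in> A" if "q \<in> A" for q c
  proof (cases "c \<ge> 0")
    case True then show ?thesis using A_multn[OF that, of "nat c"] by simp
  next
    case False then show ?thesis using A_neg[OF A_multn[OF that, of "nat (-c)"]] by simp
  qed
  define B where "B = {n::nat. 0 < n \<and> int n \<in> A}"
  have NB: "nat N \<in> B" using N(1) A_N by (simp add: B_def)
  define q where "q = int (LEAST n. n \<in> B)"
  have qB: "(LEAST n. n \<in> B) \<in> B" using NB by (rule LeastI)
  hence q_pos: "q > 0" and qA: "q \<in> A" by (auto simp: q_def B_def)
  have q_dvd: "q dvd j" if "j \<in> A" for j
  proof (rule ccontr)
    assume nd: "\<not> q dvd j"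
    have "j mod q = j + (- (j div q)) * q" by (metis minus_div_mult_eq_mod mult_minus_left diff_conv_add_uminus)
    hence "j mod q \<in> A" using A_add[OF that A_mult[OF qA]] by metis
    moreover have "j mod q \<noteq> 0" using nd by (simp add: dvd_eq_mod_eq_0)
    moreover have "0 \<le> j mod q" "j mod q < q" using q_pos by simp_all
    ultimately have "nat (j mod q) \<in> B" by (simp add: B_def)
    hence "(LEAST n. n \<in> B) \<le> nat (j mod q)" by (rule Least_le)
    hence "q \<le> int (nat (j mod q))" unfolding q_def by linarith
    thus False using \<open>0 \<le> j mod q\<close> \<open>j mod q < q\<close> by simp
  qed
  have "\<forall>r\<in>{0..<N} - A. \<exists>\<eta>>0. \<forall>m. \<eta> \<le> g (r + m*N)"
  proof
    fix r assume "r \<in> {0..<N} - A"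
    hence "\<not> (\<forall>\<eta>>0. \<exists>m. g (r + m*N) < \<eta>)" unfolding A_def by blast
    thus "\<exists>\<eta>>0. \<forall>m. \<eta> \<le> g (r + m*N)" by (meson not_less)
  qed
  then obtain \<eta> where \<eta>: "\<And>r. r \<in> {0..<N} - A \<Longrightarrow> \<eta> r > 0 \<and> (\<forall>m. \<eta> r \<le> g (r + m*N))"
    by metis
  define \<delta> where "\<delta> = Min (insert 1 (\<eta> ` ({0..<N} - A)))"
  have fin: "finite (insert 1 (\<eta> ` ({0..<N} - A)))" by simp
  have \<delta>_pos: "\<delta> > 0" unfolding \<delta>_def Min_gr_iff[OF fin insert_not_empty] using \<eta> by auto
  have \<delta>_le: "\<delta> \<le> \<eta> r" if "r \<in> {0..<N} - A" for r
    unfolding \<delta>_def using that fin by (intro Min_le) auto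
  have "q dvd j" if "g j < \<delta>" for j
  proof -
    have jr: "j mod N + (j div N) * N = j" by simp
    have "j mod N \<in> A"
    proof (rule ccontr)
      assume "j mod N \<notin> A"
      hence r: "j mod N \<in> {0..<N} - A" using N(1) by simp
      hence "\<eta> (j mod N) \<le> g (j mod N + (j div N) * N)" using \<eta> by blast
      hence "\<delta> \<le> g j" using \<delta>_le[OF r] unfolding jr by linarith
      with that show False by simp
    qed
    hence "j \<in> A" using A_shift[of "j mod N" "j div N"] unfolding jr by blast
    thus ?thesis by (rule q_dvd)
  qed
  hence qT: "q \<in> T" unfolding T_def using q_pos \<delta>_pos by blast
  have "g j < e" if "q dvd j" for j
  proof -
    from that obtain c where c: "j = q * c" by (rule dvdE)
    hence "j \<in> A" using A_mult[OF qA, of c] by (simp add: mult.commute)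
    then obtain m where m: "g (j + m*N) < e/2" using Ai assms by (meson half_gt_zero)
    have eq: "j = (j + m*N) + (-m)*N" by (simp add: algebra_simps)
    have "g j \<le> g (j + m*N) + g ((-m)*N)"
      by (subst eq) (rule g_triangle)
    thus ?thesis using m N(2)[of "-m"] by linarith
  qed
  with qT show ?thesis by blast
qed

end
context lpd begin
lemma hull_inj:
  assumes "x \<in> pot_hull d" "y \<in> pot_hull d" "\<And>q. q \<in> T \<Longrightarrow> fq q x = fq q y"
  shows "x = y"
proof (rule ccontr)
  assume "x \<noteq> y"
  define e where "e = dist x y / 3"
  have e: "e > 0" using \<open>x \<noteq> y\<close> by (simp add: e_def)
  obtain q where q: "q \<in> T" "\<And>j. q dvd j \<Longrightarrow> g j < e" using richness[OF e] by blast
  have m: "min (del q / 2) e > 0" using del(1)[OF q(1)] e by simp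
  obtain k where k: "dist x (shiftp k d) < min (del q / 2) e" using hull_approx[OF assms(1) m] by blast
  obtain l where l: "dist y (shiftp l d) < min (del q / 2) e" using hull_approx[OF assms(2) m] by blast
  have "fq q x = k mod q" using fq_eq[OF q(1) assms(1)] k by simp
  moreover have "fq q y = l mod q" using fq_eq[OF q(1) assms(2)] l by simp
  ultimately have "k mod q = l mod q" using assms(3)[OF q(1)] by simp
  hence "q dvd k - l" by (simp add: mod_eq_dvd_iff)
  hence "dist (shiftp k d) (shiftp l d) < e" using q(2) by (simp add: dist_orb)
  hence "dist x y < 3 * e"
    using dist_triangle[of x y "shiftp k d"] dist_triangle[of "shiftp k d" y "shiftp l d"]
      dist_commute[of y "shiftp l d"] k l by linarith
  thus False by (simp add: e_def)
qed

lemma hull_compact: "compact (pot_hull d)"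
  unfolding compact_eq_totally_bounded
proof
  show "complete (pot_hull d)"
  proof (rule complete_closed_subset)
    show "closed (pot_hull d)" by (simp add: pot_hull_def)
    show "complete (UNIV :: potential set)" by (rule complete_potential)
  qed simp
  show "\<forall>\<epsilon>>0. \<exists>k. finite k \<and> pot_hull d \<subseteq> (\<Union>x\<in>k. ball x \<epsilon>)"
  proof (intro allI impI)
    fix \<epsilon> :: real assume "\<epsilon> > 0"
    obtain N where N: "N > 0" "\<And>m. g (m*N) < \<epsilon>/2" using lp_approx[OF lp, of "\<epsilon>/2"] \<open>\<epsilon>>0\<close> by auto
    have "pot_hull d \<subseteq> (\<Union>x\<in>(\<lambda>a. shiftp a d) ` {0..<N}. ball x \<epsilon>)"
    proof
      fix x assume x: "x \<in> pot_hull d"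
      obtain j where j: "dist x (shiftp j d) < \<epsilon>/2" using hull_approx[OF x] \<open>\<epsilon>>0\<close> by (meson half_gt_zero)
      have "dist (shiftp j d) (shiftp (j mod N) d) = g ((j div N) * N)"
        by (simp add: dist_orb minus_mod_eq_div_mult)
      hence "dist (shiftp (j mod N) d) x < \<epsilon>"
        using N(2)[of "j div N"] j dist_triangle[of "shiftp (j mod N) d" x "shiftp j d"]
          dist_commute[of "shiftp (j mod N) d" "shiftp j d"] dist_commute[of "shiftp j d" x] by linarith
      moreover have "j mod N \<in> {0..<N}" using N(1) by simp
      ultimately show "x \<in> (\<Union>x\<in>(\<lambda>a. shiftp a d) ` {0..<N}. ball x \<epsilon>)" by auto
    qed
    thus "\<exists>k. finite k \<and> pot_hull d \<subseteq> (\<Union>x\<in>k. ball x \<epsilon>)" by blast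
  qed
qed

end



definition enc :: "int \<Rightarrow> potential set" where "enc q = {const_bcontfun (real_of_int q)}"
definition dec :: "potential set \<Rightarrow> int" where "dec A = (SOME q. A = enc q)"

lemma enc_inj: "enc a = enc b \<Longrightarrow> a = b"
proof -
  assume "enc a = enc b"
  hence "const_bcontfun (real_of_int a) = (const_bcontfun (real_of_int b) :: potential)"
    by (simp add: enc_def)
  hence "apply_bcontfun (const_bcontfun (real_of_int a) :: potential) 0 = apply_bcontfun (const_bcontfun (real_of_int b) :: potential) 0"
    by simp
  thus "a = b" by (simp add: const_bcontfun.rep_eq)
qed

lemma dec_enc[simp]: "dec (enc q) = q"
  unfolding dec_def by (rule some_equality) (auto dest: enc_inj)

lemma carrier_imod: "q > 0 \<Longrightarrow> carrier (integer_mod_group (nat q)) = {0..<q}"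
  by (simp add: carrier_integer_mod_group)

lemma cyclic_imod: "q > 0 \<Longrightarrow> cyclic_group (integer_mod_group (nat q))"
proof -
  assume q: "q > 0"
  interpret group "integer_mod_group (nat q)" by simp
  have "1 mod q \<in> carrier (integer_mod_group (nat q))" using q by (simp add: carrier_imod)
  moreover have "carrier (integer_mod_group (nat q)) = range (\<lambda>m::int. (1 mod q) [^]\<^bsub>integer_mod_group (nat q)\<^esub> m)"
  proof -
    have "(1 mod q) [^]\<^bsub>integer_mod_group (nat q)\<^esub> m = m mod q" for m :: int
      using q by (simp add: int_pow_integer_mod_group mod_mult_right_eq)
    moreover have "{0..<q} = range (\<lambda>m::int. m mod q)"
    proof
      show "{0..<q} \<subseteq> range (\<lambda>m::int. m mod q)"
      proof
        fix r assume "r \<in> {0..<q}"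
        hence "r = r mod q" by simp
        thus "r \<in> range (\<lambda>m::int. m mod q)" by blast
      qed
    qed (use q in auto)
    ultimately show ?thesis using q by (simp add: carrier_imod)
  qed
  ultimately show ?thesis unfolding cyclic_group by blast
qed

context lpd begin

definition I :: "potential set set" where "I = enc ` T"
definition leq :: "potential set \<Rightarrow> potential set \<Rightarrow> bool" where "leq A B \<longleftrightarrow> dec A dvd dec B"
definition X :: "potential set \<Rightarrow> int monoid" where "X A = integer_mod_group (nat (dec A))"
definition phi :: "potential set \<Rightarrow> potential set \<Rightarrow> int \<Rightarrow> int" where "phi A B x = x mod dec A"

lemma carrier_X: "q \<in> T \<Longrightarrow> carrier (X (enc q)) = {0..<q}"
  by (simp add: X_def carrier_imod T_pos)

lemma mult_X: "q \<in> T \<Longrightarrow> x \<otimes>\<^bsub>X (enc q)\<^esub> y = (x + y) mod q"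
proof -
  assume q: "q \<in> T"
  hence "int (nat q) = q" using T_pos[OF q] by simp
  thus ?thesis by (simp add: X_def)
qed

lemma inv_sys: "inverse_system I leq X phi"
  unfolding inverse_system_def
proof (intro conjI)
  show "I \<noteq> {}" using T_1 by (auto simp: I_def)
  show "\<forall>i\<in>I. leq i i" by (simp add: leq_def)
  show "\<forall>i\<in>I. \<forall>j\<in>I. \<forall>k\<in>I. leq i j \<longrightarrow> leq j k \<longrightarrow> leq i k"
    by (auto simp: leq_def dest: dvd_trans)
  show "\<forall>i\<in>I. \<forall>j\<in>I. \<exists>k\<in>I. leq i k \<and> leq j k"
    by (auto simp: I_def leq_def intro!: bexI[OF _ T_lcm])
  show "\<forall>i\<in>I. group (X i)" by (simp add: X_def)
  show "\<forall>i\<in>I. \<forall>j\<in>I. leq i j \<longrightarrow> phi i j \<in> hom (X j) (X i)"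
  proof (intro ballI impI)
    fix i j assume ij: "i \<in> I" "j \<in> I" "leq i j"
    then obtain a b where ab: "a \<in> T" "b \<in> T" "i = enc a" "j = enc b" "a dvd b"
      by (auto simp: I_def leq_def)
    show "phi i j \<in> hom (X j) (X i)"
      unfolding hom_def using ab T_pos[OF ab(1)] T_pos[OF ab(2)]
      by (auto simp: carrier_X mult_X phi_def mod_mod_cancel mod_add_eq)
  qed
  show "\<forall>i\<in>I. \<forall>x\<in>carrier (X i). phi i i x = x"
    by (auto simp: I_def carrier_X phi_def)
  show "\<forall>i\<in>I. \<forall>j\<in>I. \<forall>k\<in>I. leq i j \<longrightarrow> leq j k \<longrightarrow>
        (\<forall>x\<in>carrier (X k). phi i j (phi j k x) = phi i k x)"
    by (auto simp: I_def leq_def phi_def mod_mod_cancel)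
qed

lemma X_fin_cyc: "i \<in> I \<Longrightarrow> finite (carrier (X i)) \<and> cyclic_group (X i)"
  by (auto simp: I_def X_def cyclic_imod T_pos carrier_imod)

end
context lpd begin

definition H :: "potential \<Rightarrow> potential set \<Rightarrow> int" where
  "H x = (\<lambda>i\<in>I. fq (dec i) x)"

lemma H_enc: "q \<in> T \<Longrightarrow> H x (enc q) = fq q x"
  by (simp add: H_def I_def)

lemma carrier_L: "carrier (inv_lim I leq X phi) = inv_lim_carrier I leq X phi"
  by (simp add: inv_lim_def)

lemma fq_bounds: "q \<in> T \<Longrightarrow> 0 \<le> fq q x \<and> fq q x < q"
  using fq_range[of q x] by simp

lemma H_in: "x \<in> pot_hull d \<Longrightarrow> H x \<in> inv_lim_carrier I leq X phi"
  unfolding inv_lim_carrier_def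
  by (auto simp: H_def I_def carrier_X fq_bounds leq_def phi_def fq_dvd)

lemma H_inj: "inj_on H (pot_hull d)"
proof (rule inj_onI)
  fix x y assume xy: "x \<in> pot_hull d" "y \<in> pot_hull d" "H x = H y"
  show "x = y"
  proof (rule hull_inj[OF xy(1,2)])
    fix q assume "q \<in> T"
    thus "fq q x = fq q y" using H_enc xy(3) by metis
  qed
qed

lemma T_upper: "finite S \<Longrightarrow> S \<subseteq> T \<Longrightarrow> \<exists>q\<in>T. \<forall>a\<in>S. a dvd q"
proof (induction S rule: finite_induct)
  case empty thus ?case using T_1 by blast
next
  case (insert a S)
  then obtain q where "q \<in> T" "\<forall>b\<in>S. b dvd q" by auto
  thus ?case using insert.prems T_lcm[of a q]
    by (auto intro!: bexI[of _ "lcm a q"] intro: dvd_trans)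
qed

lemma H_surj:
  assumes t: "t \<in> inv_lim_carrier I leq X phi"
  shows "\<exists>x\<in>pot_hull d. H x = t"
proof -
  have tPi: "t \<in> (\<Pi>\<^sub>E i\<in>I. carrier (X i))"
    and tc: "\<And>i j. i \<in> I \<Longrightarrow> j \<in> I \<Longrightarrow> leq i j \<Longrightarrow> phi i j (t j) = t i"
    using t by (auto simp: inv_lim_carrier_def)
  have trange: "t (enc q) \<in> {0..<q}" if "q \<in> T" for q
  proof -
    have "t (enc q) \<in> carrier (X (enc q))" using tPi that by (auto simp: I_def PiE_iff)
    thus ?thesis using carrier_X[OF that] by simp
  qed
  have tcomp: "t (enc q) mod a = t (enc a)" if "a \<in> T" "q \<in> T" "a dvd q" for a q
    using tc[of "enc a" "enc q"] that by (simp add: I_def leq_def phi_def)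
  define Aset where "Aset q = {x \<in> pot_hull d. fq q x = t (enc q)}" for q
  have hc: "closed (pot_hull d)" by (simp add: pot_hull_def)
  have "pot_hull d \<inter> (\<Inter>q\<in>T. Aset q) \<noteq> {}"
  proof (rule compact_imp_fip_image[OF hull_compact])
    fix q assume q: "q \<in> T"
    show "closed (Aset q)"
      unfolding closure_subset_eq[symmetric]
    proof
      fix x assume x: "x \<in> closure (Aset q)"
      have "Aset q \<subseteq> pot_hull d" by (auto simp: Aset_def)
      hence xh: "x \<in> pot_hull d" using x closure_minimal[OF _ hc] by blast
      obtain y where y: "y \<in> Aset q" "dist y x < del q / 4"
        using x del(1)[OF q] unfolding closure_approachable by (metis divide_pos_pos zero_less_numeral)
      hence "fq q x = fq q y" using fq_local[OF q _ xh] by (auto simp: Aset_def)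
      thus "x \<in> Aset q" using y xh by (auto simp: Aset_def)
    qed
  next
    fix S assume S: "finite S" "S \<subseteq> T"
    then obtain q where q: "q \<in> T" "\<forall>a\<in>S. a dvd q" using T_upper by blast
    define x0 where "x0 = shiftp (t (enc q)) d"
    have x0h: "x0 \<in> pot_hull d" by (simp add: x0_def orb_in_hull)
    have "x0 \<in> Aset a" if "a \<in> S" for a
    proof -
      have a: "a \<in> T" using that S by auto
      have "fq a x0 = fq q x0 mod a" using fq_dvd[OF a q(1) _ x0h] q(2) that by simp
      also have "fq q x0 = t (enc q)" using fq_orb[OF q(1)] trange[OF q(1)] by (simp add: x0_def)
      also have "t (enc q) mod a = t (enc a)" using tcomp a q that by simp
      finally show ?thesis using x0h by (simp add: Aset_def)
    qed
    thus "pot_hull d \<inter> (\<Inter>a\<in>S. Aset a) \<noteq> {}" using x0h by blast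
  qed
  then obtain x where x: "x \<in> pot_hull d" "\<And>q. q \<in> T \<Longrightarrow> fq q x = t (enc q)"
    by (auto simp: Aset_def)
  have "H x = t"
  proof
    fix i show "H x i = t i"
    proof (cases "i \<in> I")
      case True
      then obtain q where "q \<in> T" "i = enc q" by (auto simp: I_def)
      thus ?thesis using x(2) H_enc by simp
    next
      case False
      thus ?thesis using tPi by (simp add: H_def PiE_def extensional_def)
    qed
  qed
  with x(1) show ?thesis by blast
qed

end

context lpd begin
lemma topspace_LT: "topspace (inv_lim_topology I leq X phi) = inv_lim_carrier I leq X phi"
  by (auto simp: inv_lim_topology_def inv_lim_carrier_def)

lemma H_image: "H ` pot_hull d = inv_lim_carrier I leq X phi"
  using H_in H_surj by blast

lemma cont_fq:
  assumes q: "q \<in> T"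
  shows "continuous_map (top_of_set (pot_hull d)) (discrete_topology {0..<q}) (fq q)"
  unfolding continuous_map_def
proof (intro conjI allI impI)
  show "fq q \<in> topspace (top_of_set (pot_hull d)) \<rightarrow> topspace (discrete_topology {0..<q})"
    using fq_range[OF q] by auto
  fix U assume "openin (discrete_topology {0..<q}) U"
  show "openin (top_of_set (pot_hull d)) {x \<in> topspace (top_of_set (pot_hull d)). fq q x \<in> U}"
    unfolding openin_euclidean_subtopology_iff
  proof (intro conjI ballI)
    fix x assume x: "x \<in> {x \<in> topspace (top_of_set (pot_hull d)). fq q x \<in> U}"
    show "\<exists>e>0. \<forall>x'\<in>pot_hull d. dist x' x < e \<longrightarrow> x' \<in> {x \<in> topspace (top_of_set (pot_hull d)). fq q x \<in> U}"
    proof -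
      from x have xh: "x \<in> pot_hull d" and fx: "fq q x \<in> U" by auto
      have pos: "del q / 4 > 0" using del(1)[OF q] by simp
      have "\<forall>x'\<in>pot_hull d. dist x' x < del q / 4 \<longrightarrow> x' \<in> {x \<in> topspace (top_of_set (pot_hull d)). fq q x \<in> U}"
      proof (intro ballI impI)
        fix x' assume x': "x' \<in> pot_hull d" "dist x' x < del q / 4"
        hence "fq q x' = fq q x" using fq_local[OF q xh x'(1)] by (simp add: dist_commute)
        thus "x' \<in> {x \<in> topspace (top_of_set (pot_hull d)). fq q x \<in> U}" using fx x'(1) by simp
      qed
      thus ?thesis using pos by blast
    qed
  qed auto
qed

lemma H_cont: "continuous_map (top_of_set (pot_hull d)) (inv_lim_topology I leq X phi) H"
  unfolding inv_lim_topology_def continuous_map_in_subtopology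
proof
  show "H \<in> topspace (top_of_set (pot_hull d)) \<rightarrow> inv_lim_carrier I leq X phi"
    using H_in by auto
  show "continuous_map (top_of_set (pot_hull d)) (product_topology (\<lambda>i. discrete_topology (carrier (X i))) I) H"
    unfolding continuous_map_componentwise
  proof
    show "H ` topspace (top_of_set (pot_hull d)) \<subseteq> extensional I" by (auto simp: H_def)
    show "\<forall>k\<in>I. continuous_map (top_of_set (pot_hull d)) (discrete_topology (carrier (X k))) (\<lambda>x. H x k)"
      using cont_fq by (auto simp: I_def H_enc carrier_X)
  qed
qed

lemma LT_Hausdorff: "Hausdorff_space (inv_lim_topology I leq X phi)"
  unfolding inv_lim_topology_def
  by (intro Hausdorff_space_subtopology) (simp add: Hausdorff_space_product_topology)

lemma H_homeo: "homeomorphic_map (top_of_set (pot_hull d)) (inv_lim_topology I leq X phi) H"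
proof (rule continuous_imp_homeomorphic_map[OF H_cont _ LT_Hausdorff])
  show "compact_space (top_of_set (pot_hull d))"
    by (rule compact_space_subtopology) (simp add: hull_compact)
  show "H ` topspace (top_of_set (pot_hull d)) = topspace (inv_lim_topology I leq X phi)"
    using H_image topspace_LT by simp
  show "inj_on H (topspace (top_of_set (pot_hull d)))" using H_inj by simp
qed

end


lemma inv_lim_group:
  assumes sys: "inverse_system I leq X \<phi>"
  shows "group (inv_lim I leq X \<phi>)"
proof -
  have grp: "\<And>i. i \<in> I \<Longrightarrow> group (X i)" using sys by (simp add: inverse_system_def)
  have hom: "\<And>i j. i \<in> I \<Longrightarrow> j \<in> I \<Longrightarrow> leq i j \<Longrightarrow> group_hom (X j) (X i) (\<phi> i j)"
    using sys grp unfolding inverse_system_def group_hom_def group_hom_axioms_def by blast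
  let ?L = "inv_lim I leq X \<phi>"
  have carr: "x \<in> carrier ?L \<longleftrightarrow> x \<in> (\<Pi>\<^sub>E i\<in>I. carrier (X i)) \<and> (\<forall>i\<in>I. \<forall>j\<in>I. leq i j \<longrightarrow> \<phi> i j (x j) = x i)" for x
    by (simp add: inv_lim_def inv_lim_carrier_def)
  have mult: "x \<otimes>\<^bsub>?L\<^esub> y = (\<lambda>i\<in>I. x i \<otimes>\<^bsub>X i\<^esub> y i)" for x y
    by (simp add: inv_lim_def)
  have one: "\<one>\<^bsub>?L\<^esub> = (\<lambda>i\<in>I. \<one>\<^bsub>X i\<^esub>)" by (simp add: inv_lim_def)
  have comp: "x \<in> carrier ?L \<Longrightarrow> i \<in> I \<Longrightarrow> x i \<in> carrier (X i)" for x i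
    by (auto simp: carr PiE_iff)
  have compat: "x \<in> carrier ?L \<Longrightarrow> i \<in> I \<Longrightarrow> j \<in> I \<Longrightarrow> leq i j \<Longrightarrow> \<phi> i j (x j) = x i" for x i j
    by (auto simp: carr)
  have ext: "x \<in> carrier ?L \<Longrightarrow> i \<notin> I \<Longrightarrow> x i = undefined" for x i
    by (auto simp: carr PiE_iff extensional_def)
  have eqI: "x = y" if "x \<in> carrier ?L" "\<And>i. i \<in> I \<Longrightarrow> x i = y i" "y \<in> extensional I" for x y
  proof
    fix i show "x i = y i"
      using that ext[OF that(1), of i] by (cases "i \<in> I") (auto simp: extensional_def)
  qed
  show ?thesis
  proof (rule groupI)
    fix x y assume x: "x \<in> carrier ?L" and y: "y \<in> carrier ?L"
    show "x \<otimes>\<^bsub>?L\<^esub> y \<in> carrier ?L"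
      unfolding carr mult
    proof (intro conjI ballI impI)
      show "(\<lambda>i\<in>I. x i \<otimes>\<^bsub>X i\<^esub> y i) \<in> (\<Pi>\<^sub>E i\<in>I. carrier (X i))"
        using x y grp comp by (auto simp: PiE_iff intro: group.is_monoid monoid.m_closed)
      fix i j assume ij: "i \<in> I" "j \<in> I" "leq i j"
      have "\<phi> i j (x j \<otimes>\<^bsub>X j\<^esub> y j) = \<phi> i j (x j) \<otimes>\<^bsub>X i\<^esub> \<phi> i j (y j)"
        using group_hom.hom_mult[OF hom[OF ij]] comp x y ij by simp
      thus "\<phi> i j ((\<lambda>i\<in>I. x i \<otimes>\<^bsub>X i\<^esub> y i) j) = (\<lambda>i\<in>I. x i \<otimes>\<^bsub>X i\<^esub> y i) i"
        using compat x y ij by simp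
    qed
  next
    show "\<one>\<^bsub>?L\<^esub> \<in> carrier ?L"
      unfolding carr one
      using grp group_hom.hom_one[OF hom] by (auto simp: PiE_iff intro: monoid.one_closed group.is_monoid)
  next
    fix x y z assume x: "x \<in> carrier ?L" and y: "y \<in> carrier ?L" and z: "z \<in> carrier ?L"
    show "x \<otimes>\<^bsub>?L\<^esub> y \<otimes>\<^bsub>?L\<^esub> z = x \<otimes>\<^bsub>?L\<^esub> (y \<otimes>\<^bsub>?L\<^esub> z)"
      unfolding mult
    proof (rule restrict_ext)
      fix i assume i: "i \<in> I"
      show "(\<lambda>i\<in>I. x i \<otimes>\<^bsub>X i\<^esub> y i) i \<otimes>\<^bsub>X i\<^esub> z i = x i \<otimes>\<^bsub>X i\<^esub> (\<lambda>i\<in>I. y i \<otimes>\<^bsub>X i\<^esub> z i) i"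
        using i comp[OF x i] comp[OF y i] comp[OF z i] monoid.m_assoc[OF group.is_monoid[OF grp[OF i]]]
        by simp
    qed
  next
    fix x assume x: "x \<in> carrier ?L"
    show "\<one>\<^bsub>?L\<^esub> \<otimes>\<^bsub>?L\<^esub> x = x"
      unfolding mult one
      by (rule eqI[OF x, symmetric]) (auto simp: monoid.l_one[OF group.is_monoid[OF grp]] comp[OF x])
    define y where "y = (\<lambda>i\<in>I. inv\<^bsub>X i\<^esub> (x i))"
    have yc: "y \<in> carrier ?L"
      unfolding carr
    proof (intro conjI ballI impI)
      show "y \<in> (\<Pi>\<^sub>E i\<in>I. carrier (X i))"
        using x comp grp by (auto simp: y_def PiE_iff intro: group.inv_closed)
      fix i j assume ij: "i \<in> I" "j \<in> I" "leq i j"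
      show "\<phi> i j (y j) = y i"
        using group_hom.hom_inv[OF hom[OF ij], of "x j"] comp[OF x ij(2)] compat[OF x ij] ij
        by (simp add: y_def)
    qed
    have "y \<otimes>\<^bsub>?L\<^esub> x = \<one>\<^bsub>?L\<^esub>"
      unfolding mult one y_def
      by (rule restrict_ext) (simp add: group.l_inv[OF grp] comp[OF x])
    with yc show "\<exists>y\<in>carrier ?L. y \<otimes>\<^bsub>?L\<^esub> x = \<one>\<^bsub>?L\<^esub>" by blast
  qed
qed


lemma inv_lim_inv:
  assumes sys: "inverse_system I leq X \<phi>" and x: "x \<in> carrier (inv_lim I leq X \<phi>)"
  shows "inv\<^bsub>inv_lim I leq X \<phi>\<^esub> x = (\<lambda>i\<in>I. inv\<^bsub>X i\<^esub> (x i))"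
proof -
  have grp: "\<And>i. i \<in> I \<Longrightarrow> group (X i)" using sys by (simp add: inverse_system_def)
  have hom: "\<And>i j. i \<in> I \<Longrightarrow> j \<in> I \<Longrightarrow> leq i j \<Longrightarrow> group_hom (X j) (X i) (\<phi> i j)"
    using sys grp unfolding inverse_system_def group_hom_def group_hom_axioms_def by blast
  let ?L = "inv_lim I leq X \<phi>"
  have carr: "x \<in> carrier ?L \<longleftrightarrow> x \<in> (\<Pi>\<^sub>E i\<in>I. carrier (X i)) \<and> (\<forall>i\<in>I. \<forall>j\<in>I. leq i j \<longrightarrow> \<phi> i j (x j) = x i)" for x
    by (simp add: inv_lim_def inv_lim_carrier_def)
  have mult: "x \<otimes>\<^bsub>?L\<^esub> y = (\<lambda>i\<in>I. x i \<otimes>\<^bsub>X i\<^esub> y i)" for x y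
    by (simp add: inv_lim_def)
  have one: "\<one>\<^bsub>?L\<^esub> = (\<lambda>i\<in>I. \<one>\<^bsub>X i\<^esub>)" by (simp add: inv_lim_def)
  have comp: "x \<in> carrier ?L \<Longrightarrow> i \<in> I \<Longrightarrow> x i \<in> carrier (X i)" for x i
    by (auto simp: carr PiE_iff)
  have compat: "x \<in> carrier ?L \<Longrightarrow> i \<in> I \<Longrightarrow> j \<in> I \<Longrightarrow> leq i j \<Longrightarrow> \<phi> i j (x j) = x i" for x i j
    by (auto simp: carr)
  define y where "y = (\<lambda>i\<in>I. inv\<^bsub>X i\<^esub> (x i))"
  have yc: "y \<in> carrier ?L"
    unfolding carr
  proof (intro conjI ballI impI)
    show "y \<in> (\<Pi>\<^sub>E i\<in>I. carrier (X i))"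
      using x comp grp by (auto simp: y_def PiE_iff intro: group.inv_closed)
    fix i j assume ij: "i \<in> I" "j \<in> I" "leq i j"
    show "\<phi> i j (y j) = y i"
      using group_hom.hom_inv[OF hom[OF ij], of "x j"] comp[OF x ij(2)] compat[OF x ij] ij
      by (simp add: y_def)
  qed
  have "y \<otimes>\<^bsub>?L\<^esub> x = \<one>\<^bsub>?L\<^esub>"
    unfolding mult one y_def
    by (rule restrict_ext) (simp add: group.l_inv[OF grp] comp[OF x])
  hence "inv\<^bsub>?L\<^esub> x = y" using group.inv_equality[OF inv_lim_group[OF sys] _ x yc] by blast
  thus ?thesis by (simp add: y_def)
qed

lemma topspace_inv_lim_topology:
  "topspace (inv_lim_topology I leq X \<phi>) = inv_lim_carrier I leq X \<phi>"
  by (auto simp: inv_lim_topology_def inv_lim_carrier_def)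

lemma inv_lim_mult_cont:
  assumes sys: "inverse_system I leq X \<phi>"
  shows "continuous_map (prod_topology (inv_lim_topology I leq X \<phi>) (inv_lim_topology I leq X \<phi>))
           (inv_lim_topology I leq X \<phi>) (\<lambda>(x, y). x \<otimes>\<^bsub>inv_lim I leq X \<phi>\<^esub> y)"
proof -
  let ?L = "inv_lim I leq X \<phi>"
  let ?P = "product_topology (\<lambda>i. discrete_topology (carrier (X i))) I"
  let ?C = "inv_lim_carrier I leq X \<phi>"
  let ?S = "prod_topology (inv_lim_topology I leq X \<phi>) (inv_lim_topology I leq X \<phi>)"
  have grp: "\<And>i. i \<in> I \<Longrightarrow> group (X i)" using sys by (simp add: inverse_system_def)
  have tS: "topspace ?S = ?C \<times> ?C" by (simp add: topspace_inv_lim_topology)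
  have G: "group ?L" by (rule inv_lim_group[OF sys])
  have "continuous_map ?S ?P (\<lambda>(x, y). x \<otimes>\<^bsub>?L\<^esub> y)"
    unfolding continuous_map_componentwise
  proof
    show "(\<lambda>(x, y). x \<otimes>\<^bsub>?L\<^esub> y) ` topspace ?S \<subseteq> extensional I"
      by (auto simp: inv_lim_def)
    show "\<forall>k\<in>I. continuous_map ?S (discrete_topology (carrier (X k))) (\<lambda>z. (case z of (x, y) \<Rightarrow> x \<otimes>\<^bsub>?L\<^esub> y) k)"
    proof
      fix k assume k: "k \<in> I"
      have pk: "continuous_map (inv_lim_topology I leq X \<phi>) (discrete_topology (carrier (X k))) (\<lambda>x. x k)"
        unfolding inv_lim_topology_def
        by (rule continuous_map_from_subtopology) (rule continuous_map_product_projection[OF k])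
      have c1: "continuous_map ?S (prod_topology (discrete_topology (carrier (X k))) (discrete_topology (carrier (X k))))
                  (\<lambda>z. (fst z k, snd z k))"
        by (intro continuous_map_pairedI continuous_map_compose[OF continuous_map_fst pk, unfolded o_def]
                  continuous_map_compose[OF continuous_map_snd pk, unfolded o_def])
      have c2: "continuous_map (prod_topology (discrete_topology (carrier (X k))) (discrete_topology (carrier (X k))))
                  (discrete_topology (carrier (X k))) (\<lambda>(a, b). a \<otimes>\<^bsub>X k\<^esub> b)"
        unfolding prod_topology_discrete_topology[symmetric]
        using group.is_monoid[OF grp[OF k]] by (auto intro: monoid.m_closed)
      have "continuous_map ?S (discrete_topology (carrier (X k))) ((\<lambda>(a, b). a \<otimes>\<^bsub>X k\<^esub> b) \<circ> (\<lambda>z. (fst z k, snd z k)))"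
        by (rule continuous_map_compose[OF c1 c2])
      thus "continuous_map ?S (discrete_topology (carrier (X k))) (\<lambda>z. (case z of (x, y) \<Rightarrow> x \<otimes>\<^bsub>?L\<^esub> y) k)"
        by (rule continuous_map_eq) (use k in \<open>auto simp: inv_lim_def\<close>)
    qed
  qed
  moreover have "(\<lambda>(x, y). x \<otimes>\<^bsub>?L\<^esub> y) \<in> topspace ?S \<rightarrow> ?C"
    using monoid.m_closed[OF group.is_monoid[OF G]] tS by (auto simp: inv_lim_def)
  ultimately have "continuous_map ?S (subtopology ?P ?C) (\<lambda>(x, y). x \<otimes>\<^bsub>?L\<^esub> y)"
    using continuous_map_in_subtopology by blast
  thus ?thesis by (simp only: inv_lim_topology_def)
qed

lemma inv_lim_inv_cont:
  assumes sys: "inverse_system I leq X \<phi>"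
  shows "continuous_map (inv_lim_topology I leq X \<phi>) (inv_lim_topology I leq X \<phi>)
           (\<lambda>x. inv\<^bsub>inv_lim I leq X \<phi>\<^esub> x)"
proof -
  let ?L = "inv_lim I leq X \<phi>"
  let ?P = "product_topology (\<lambda>i. discrete_topology (carrier (X i))) I"
  let ?C = "inv_lim_carrier I leq X \<phi>"
  let ?S = "inv_lim_topology I leq X \<phi>"
  have grp: "\<And>i. i \<in> I \<Longrightarrow> group (X i)" using sys by (simp add: inverse_system_def)
  have G: "group ?L" by (rule inv_lim_group[OF sys])
  have cl: "carrier ?L = ?C" by (simp add: inv_lim_def)
  have "continuous_map ?S ?P (\<lambda>x. (\<lambda>i\<in>I. inv\<^bsub>X i\<^esub> (x i)))"
    unfolding continuous_map_componentwise
  proof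
    show "(\<lambda>x. (\<lambda>i\<in>I. inv\<^bsub>X i\<^esub> (x i))) ` topspace ?S \<subseteq> extensional I" by auto
    show "\<forall>k\<in>I. continuous_map ?S (discrete_topology (carrier (X k))) (\<lambda>x. (\<lambda>i\<in>I. inv\<^bsub>X i\<^esub> (x i)) k)"
    proof
      fix k assume k: "k \<in> I"
      have pk: "continuous_map ?S (discrete_topology (carrier (X k))) (\<lambda>x. x k)"
        unfolding inv_lim_topology_def
        by (rule continuous_map_from_subtopology) (rule continuous_map_product_projection[OF k])
      have c2: "continuous_map (discrete_topology (carrier (X k))) (discrete_topology (carrier (X k))) (\<lambda>a. inv\<^bsub>X k\<^esub> a)"
        using group.inv_closed[OF grp[OF k]] by auto
      have "continuous_map ?S (discrete_topology (carrier (X k))) ((\<lambda>a. inv\<^bsub>X k\<^esub> a) \<circ> (\<lambda>x. x k))"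
        by (rule continuous_map_compose[OF pk c2])
      thus "continuous_map ?S (discrete_topology (carrier (X k))) (\<lambda>x. (\<lambda>i\<in>I. inv\<^bsub>X i\<^esub> (x i)) k)"
        by (rule continuous_map_eq) (use k in auto)
    qed
  qed
  moreover have "(\<lambda>x. (\<lambda>i\<in>I. inv\<^bsub>X i\<^esub> (x i))) \<in> topspace ?S \<rightarrow> ?C"
  proof
    fix x assume "x \<in> topspace ?S"
    hence x: "x \<in> carrier ?L" using cl topspace_inv_lim_topology by metis
    have "inv\<^bsub>?L\<^esub> x \<in> carrier ?L" by (rule group.inv_closed[OF G x])
    thus "(\<lambda>i\<in>I. inv\<^bsub>X i\<^esub> (x i)) \<in> ?C" using inv_lim_inv[OF sys x] cl by simp
  qed
  ultimately have "continuous_map ?S (subtopology ?P ?C) (\<lambda>x. (\<lambda>i\<in>I. inv\<^bsub>X i\<^esub> (x i)))"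
    using continuous_map_in_subtopology by blast
  hence "continuous_map ?S ?S (\<lambda>x. (\<lambda>i\<in>I. inv\<^bsub>X i\<^esub> (x i)))"
    by (simp only: inv_lim_topology_def)
  thus ?thesis
    by (rule continuous_map_eq) (simp add: inv_lim_inv[OF sys] cl topspace_inv_lim_topology)
qed




context lpd begin

lemma mult_L_enc:
  assumes "q \<in> T"
  shows "(a \<otimes>\<^bsub>inv_lim I leq X phi\<^esub> b) (enc q) = (a (enc q) + b (enc q)) mod q"
  using assms mult_X[OF assms] by (simp add: inv_lim_def I_def)

lemma mult_L_out: "i \<notin> I \<Longrightarrow> (a \<otimes>\<^bsub>inv_lim I leq X phi\<^esub> b) i = undefined"
  by (simp add: inv_lim_def)

lemma H_out: "i \<notin> I \<Longrightarrow> H x i = undefined"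
  by (simp add: H_def)

lemma H_eqI:
  assumes "\<And>q. q \<in> T \<Longrightarrow> a (enc q) = b (enc q)" "\<And>i. i \<notin> I \<Longrightarrow> a i = b i"
  shows "a = b"
proof
  fix i show "a i = b i"
    using assms by (cases "i \<in> I") (auto simp: I_def)
qed

lemma H_hom_G:
  assumes G: "hull_group d G"
  shows "H \<in> hom G (inv_lim I leq X phi)"
proof -
  from G have cG: "carrier G = pot_hull d" and tg: "topological_group G (top_of_set (pot_hull d))"
    and sh: "\<And>j k. shiftp (j+k) d = shiftp j d \<otimes>\<^bsub>G\<^esub> shiftp k d"
    by (auto simp: hull_group_def)
  from tg have grpG: "group G"
    and cm: "continuous_map (prod_topology (top_of_set (pot_hull d)) (top_of_set (pot_hull d)))
               (top_of_set (pot_hull d)) (\<lambda>(x, y). x \<otimes>\<^bsub>G\<^esub> y)"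
    unfolding topological_group_def by blast+
  have co: "continuous_on (pot_hull d \<times> pot_hull d) (\<lambda>(x, y). x \<otimes>\<^bsub>G\<^esub> y)"
    using cm unfolding prod_topology_subtopology_eu continuous_map_in_subtopology continuous_map_iff_continuous
    by blast
  have key: "fq q (x \<otimes>\<^bsub>G\<^esub> y) = (fq q x + fq q y) mod q"
    if q: "q \<in> T" and x: "x \<in> pot_hull d" and y: "y \<in> pot_hull d" for q x y
  proof -
    have xy: "x \<otimes>\<^bsub>G\<^esub> y \<in> pot_hull d"
      using monoid.m_closed[OF group.is_monoid[OF grpG]] x y cG by blast
    have dq: "del q / 2 > 0" using del(1)[OF q] by simp
    obtain \<eta> where \<eta>: "\<eta> > 0"
      "\<And>z. z \<in> pot_hull d \<times> pot_hull d \<Longrightarrow> dist z (x, y) < \<eta> \<Longrightarrow>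
         dist ((\<lambda>(x, y). x \<otimes>\<^bsub>G\<^esub> y) z) (x \<otimes>\<^bsub>G\<^esub> y) < del q / 2"
      using co[unfolded continuous_on_iff, rule_format, of "(x, y)" "del q / 2"] x y dq
      by auto
    define m where "m = min (\<eta>/2) (del q / 2)"
    have m: "m > 0" using \<eta>(1) dq by (simp add: m_def)
    obtain k where k: "dist x (shiftp k d) < m" using hull_approx[OF x m] by blast
    obtain l where l: "dist y (shiftp l d) < m" using hull_approx[OF y m] by blast
    have "dist (shiftp k d, shiftp l d) (x, y) = sqrt ((dist (shiftp k d) x)\<^sup>2 + (dist (shiftp l d) y)\<^sup>2)"
      by (simp add: dist_Pair_Pair)
    also have "\<dots> \<le> dist (shiftp k d) x + dist (shiftp l d) y"
      by (rule sqrt_sum_squares_le_sum) simp_all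
    also have "\<dots> < \<eta>" using k l by (simp add: m_def dist_commute)
    finally have "dist (shiftp k d, shiftp l d) (x, y) < \<eta>" .
    hence "dist (shiftp k d \<otimes>\<^bsub>G\<^esub> shiftp l d) (x \<otimes>\<^bsub>G\<^esub> y) < del q / 2"
      using \<eta>(2)[of "(shiftp k d, shiftp l d)"] orb_in_hull by simp
    hence "dist (x \<otimes>\<^bsub>G\<^esub> y) (shiftp (k + l) d) < del q / 2"
      using sh[of k l] by (simp add: dist_commute)
    hence "fq q (x \<otimes>\<^bsub>G\<^esub> y) = (k + l) mod q" using fq_eq[OF q xy] by blast
    moreover have "fq q x = k mod q" using fq_eq[OF q x] k by (simp add: m_def)
    moreover have "fq q y = l mod q" using fq_eq[OF q y] l by (simp add: m_def)
    ultimately show ?thesis by (simp add: mod_add_eq)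
  qed
  show ?thesis
    unfolding hom_def
  proof (intro CollectI conjI ballI)
    show "H \<in> carrier G \<rightarrow> carrier (inv_lim I leq X phi)"
      using H_in cG carrier_L by auto
    fix x y assume x: "x \<in> carrier G" and y: "y \<in> carrier G"
    show "H (x \<otimes>\<^bsub>G\<^esub> y) = H x \<otimes>\<^bsub>inv_lim I leq X phi\<^esub> H y"
    proof (rule H_eqI)
      fix q assume q: "q \<in> T"
      show "H (x \<otimes>\<^bsub>G\<^esub> y) (enc q) = (H x \<otimes>\<^bsub>inv_lim I leq X phi\<^esub> H y) (enc q)"
        using key[OF q] x y cG by (simp add: mult_L_enc[OF q] H_enc[OF q])
    next
      fix i assume "i \<notin> I"
      thus "H (x \<otimes>\<^bsub>G\<^esub> y) i = (H x \<otimes>\<^bsub>inv_lim I leq X phi\<^esub> H y) i"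
        by (simp add: mult_L_out H_out)
    qed
  qed
qed

lemma procyclic_G:
  assumes G: "hull_group d G"
  shows "procyclic G (top_of_set (pot_hull d))"
  unfolding procyclic_def
proof (intro exI conjI)
  show "inverse_system I leq X phi" by (rule inv_sys)
  show "\<forall>i\<in>I. finite (carrier (X i)) \<and> cyclic_group (X i)" using X_fin_cyc by blast
  have cG: "carrier G = pot_hull d" using G by (simp add: hull_group_def)
  have "H \<in> iso G (inv_lim I leq X phi)"
    unfolding iso_def using H_hom_G[OF G] H_inj H_image cG carrier_L
    by (auto simp: bij_betw_def)
  thus "top_group_iso G (top_of_set (pot_hull d)) (inv_lim I leq X phi) (inv_lim_topology I leq X phi)"
    unfolding top_group_iso_def using H_homeo by blast
qed

end

context lpd begin

lemma H_one: "H d = \<one>\<^bsub>inv_lim I leq X phi\<^esub>"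
proof (rule H_eqI)
  fix q assume q: "q \<in> T"
  have "fq q d = 0" using fq_orb[OF q, of 0] by simp
  thus "H d (enc q) = \<one>\<^bsub>inv_lim I leq X phi\<^esub> (enc q)"
    using q by (simp add: H_enc inv_lim_def I_def X_def)
qed (simp add: H_out inv_lim_def)

lemma H_shift: "H (shiftp j d) \<otimes>\<^bsub>inv_lim I leq X phi\<^esub> H (shiftp k d) = H (shiftp (j + k) d)"
proof (rule H_eqI)
  fix q assume q: "q \<in> T"
  show "(H (shiftp j d) \<otimes>\<^bsub>inv_lim I leq X phi\<^esub> H (shiftp k d)) (enc q) = H (shiftp (j + k) d) (enc q)"
    using q by (simp add: mult_L_enc H_enc fq_orb mod_add_eq)
qed (simp add: H_out mult_L_out)

lemma exists_G: "\<exists>G. hull_group d G"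
proof -
  let ?L = "inv_lim I leq X phi"
  let ?LT = "inv_lim_topology I leq X phi"
  let ?TH = "top_of_set (pot_hull d)"
  obtain Hi where hm: "homeomorphic_maps ?TH ?LT H Hi"
    using H_homeo homeomorphic_map_maps by blast
  have tLT: "topspace ?LT = carrier ?L" by (simp add: topspace_LT carrier_L)
  have Hi_H: "\<And>x. x \<in> pot_hull d \<Longrightarrow> Hi (H x) = x"
    and H_Hi: "\<And>t. t \<in> carrier ?L \<Longrightarrow> H (Hi t) = t"
    and cH: "continuous_map ?TH ?LT H" and cHi: "continuous_map ?LT ?TH Hi"
    using hm tLT unfolding homeomorphic_maps_def by auto
  have Hi_in: "\<And>t. t \<in> carrier ?L \<Longrightarrow> Hi t \<in> pot_hull d"
    using cHi tLT unfolding continuous_map_def by auto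
  have Hc: "\<And>x. x \<in> pot_hull d \<Longrightarrow> H x \<in> carrier ?L" using H_in carrier_L by simp
  have L: "group ?L" by (rule inv_lim_group[OF inv_sys])
  have dh: "d \<in> pot_hull d" using orb_in_hull[of 0] by simp
  define G0 :: "potential monoid" where
    "G0 = \<lparr>carrier = pot_hull d, mult = (\<lambda>x y. Hi (H x \<otimes>\<^bsub>?L\<^esub> H y)), one = d\<rparr>"
  have [simp]: "carrier G0 = pot_hull d" "x \<otimes>\<^bsub>G0\<^esub> y = Hi (H x \<otimes>\<^bsub>?L\<^esub> H y)" "\<one>\<^bsub>G0\<^esub> = d" for x y
    by (simp_all add: G0_def)
  have grp: "group G0"
  proof (rule groupI)
    fix x y assume "x \<in> carrier G0" "y \<in> carrier G0"
    hence "H x \<otimes>\<^bsub>?L\<^esub> H y \<in> carrier ?L" using Hc monoid.m_closed[OF group.is_monoid[OF L]] by simp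
    thus "x \<otimes>\<^bsub>G0\<^esub> y \<in> carrier G0" using Hi_in by simp
  next
    show "\<one>\<^bsub>G0\<^esub> \<in> carrier G0" using dh by simp
  next
    fix x y z assume x: "x \<in> carrier G0" and y: "y \<in> carrier G0" and z: "z \<in> carrier G0"
    have c: "H x \<in> carrier ?L" "H y \<in> carrier ?L" "H z \<in> carrier ?L" using x y z Hc by auto
    show "x \<otimes>\<^bsub>G0\<^esub> y \<otimes>\<^bsub>G0\<^esub> z = x \<otimes>\<^bsub>G0\<^esub> (y \<otimes>\<^bsub>G0\<^esub> z)"
      using c by (simp add: H_Hi monoid.m_assoc[OF group.is_monoid[OF L]] monoid.m_closed[OF group.is_monoid[OF L]])
  next
    fix x assume x: "x \<in> carrier G0"
    show "\<one>\<^bsub>G0\<^esub> \<otimes>\<^bsub>G0\<^esub> x = x"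
      using x Hc by (simp add: H_one monoid.l_one[OF group.is_monoid[OF L]] Hi_H)
    have ix: "inv\<^bsub>?L\<^esub> H x \<in> carrier ?L" using x Hc group.inv_closed[OF L] by simp
    have "Hi (inv\<^bsub>?L\<^esub> H x) \<otimes>\<^bsub>G0\<^esub> x = d"
      using ix x Hc by (simp add: H_Hi group.l_inv[OF L] H_one[symmetric] Hi_H dh)
    moreover have "Hi (inv\<^bsub>?L\<^esub> H x) \<in> carrier G0" using Hi_in ix by simp
    ultimately show "\<exists>y\<in>carrier G0. y \<otimes>\<^bsub>G0\<^esub> x = \<one>\<^bsub>G0\<^esub>" by auto
  qed
  have Hhom: "H \<in> hom G0 ?L"
    unfolding hom_def using Hc by (auto simp: H_Hi monoid.m_closed[OF group.is_monoid[OF L]])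
  have inv0: "inv\<^bsub>G0\<^esub> x = Hi (inv\<^bsub>?L\<^esub> H x)" if x: "x \<in> pot_hull d" for x
  proof -
    have gh: "group_hom G0 ?L H" using grp L Hhom by (simp add: group_hom_def group_hom_axioms_def)
    have "H (inv\<^bsub>G0\<^esub> x) = inv\<^bsub>?L\<^esub> H x" using group_hom.hom_inv[OF gh] x by simp
    moreover have "inv\<^bsub>G0\<^esub> x \<in> pot_hull d" using group.inv_closed[OF grp] x by simp
    ultimately show ?thesis using Hi_H by metis
  qed
  have cmult: "continuous_map (prod_topology ?TH ?TH) ?TH (\<lambda>(x, y). x \<otimes>\<^bsub>G0\<^esub> y)"
  proof -
    have c1: "continuous_map (prod_topology ?TH ?TH) (prod_topology ?LT ?LT) (\<lambda>z. (H (fst z), H (snd z)))"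
      by (intro continuous_map_pairedI continuous_map_compose[OF continuous_map_fst cH, unfolded o_def]
                continuous_map_compose[OF continuous_map_snd cH, unfolded o_def])
    have "continuous_map (prod_topology ?TH ?TH) ?TH (Hi \<circ> ((\<lambda>(x, y). x \<otimes>\<^bsub>?L\<^esub> y) \<circ> (\<lambda>z. (H (fst z), H (snd z)))))"
      by (intro continuous_map_compose[OF continuous_map_compose[OF c1 inv_lim_mult_cont[OF inv_sys]] cHi])
    thus ?thesis by (rule continuous_map_eq) auto
  qed
  have cinv: "continuous_map ?TH ?TH (\<lambda>x. inv\<^bsub>G0\<^esub> x)"
  proof -
    have "continuous_map ?TH ?TH (Hi \<circ> ((\<lambda>x. inv\<^bsub>?L\<^esub> x) \<circ> H))"
      by (intro continuous_map_compose[OF continuous_map_compose[OF cH inv_lim_inv_cont[OF inv_sys]] cHi])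
    thus ?thesis by (rule continuous_map_eq) (simp add: inv0)
  qed
  have "hull_group d G0"
    unfolding hull_group_def topological_group_def
  proof (intro conjI allI)
    show "carrier G0 = pot_hull d" by simp
    show "group G0" by (rule grp)
    show "topspace ?TH = carrier G0" by simp
    show "continuous_map (prod_topology ?TH ?TH) ?TH (\<lambda>(x, y). x \<otimes>\<^bsub>G0\<^esub> y)" by (rule cmult)
    show "continuous_map ?TH ?TH (\<lambda>x. inv\<^bsub>G0\<^esub> x)" by (rule cinv)
    show "\<one>\<^bsub>G0\<^esub> = d" by simp
    fix j k
    show "shiftp (j + k) d = shiftp j d \<otimes>\<^bsub>G0\<^esub> shiftp k d"
      using H_shift Hi_H orb_in_hull by simp
  qed
  thus ?thesis by blast
qed

end

theorem theorem4p9: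
  fixes d :: potential
  assumes "limit_periodic d"
  shows "(\<exists>G. hull_group d G) \<and>
         (\<forall>G. hull_group d G \<longrightarrow> procyclic G (top_of_set (pot_hull d)))"
proof -
  interpret lpd d by (unfold_locales) (rule assms)
  show ?thesis using exists_G procyclic_G by blast
qed


end
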